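(* Let $M\ge1$, let $\tau=(c,c,\ldots,c)\in\mathbb{R}^{M+1}_{>0}$ be a constant $M$-layer travel time vector and $\tau'=(c,\ldots,c)\in\mathbb{R}^{M+2}_{>0}$ its extension to a constant $(M+1)$-layer vector. Let $\mathcal{R}\subset(-1,1)^{M+1}$ be the set of all $R=(R_0,\ldots,R_M)$ for which there exists a nonzero $R_{M+1}\in(-1,1)$ such that, with $R'=(R_0,\ldots,R_{M+1})$, the models $(\tau,R)$ and $(\tau',R')$ have the same data, i.e. $D^{(\tau,R)}=D^{(\tau',R')}$ as measures. Then $\mathcal{R}$ has positive Lebesgue measure in $\mathbb{R}^{M+1}$.
   Context: An $N$-layer model ($N\ge1$) is $(\tau,R)$ with $\tau\in\mathbb{R}^{N+1}_{>0}$, $R\in(-1,1)^{N+1}$. $\mathfrak{L}_N\subset\mathbb{Z}^{N+1}_{\geq0}$: all $k$ with $k_0=1$ and $k_n>0\Rightarrow k_{n-1}>0$ ($1\le n\le N$); $\mathfrak{L}^\tau_N=\{k\in\mathfrak{L}_N:\langle k,\tau\rangle\le\langle\mathbb{1},\tau\rangle\}$. Amplitude polynomial: $\mathbb{1}=(1,\ldots,1)$; inequalities and $\min$ entrywise; $x^k=\prod_n x_n^{k_n}$, $\binom{k}{b}=\prod_n\binom{k_n}{b_n}$; $\tilde k=(k_1,\ldots,k_N,0)$, $u=\min\{\mathbb{1},\tilde k\}$, $V(k)=\{b:u\le b\le\min\{k,\tilde k\}\}$, $a(x,k)=\sum_{b\in V(k)}\binom{k}{b}\binom{\tilde k-u}{b-u}(-x)^{\tilde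 k-b}x^{k-b}\prod_n(1-x_n^2)^{b_n}$. The data of an $N$-layer model is the discrete measure $D^{(\tau,R)}(t)=\sum_{k\in\mathfrak{L}^\tau_N}a(R,k)\delta(t-\langle k,\tau\rangle)$ (equal to the truncated impulse response $\chi_{[0,|\tau|]}G^{(\tau,R)}$ of the layered medium, $|\tau|=\sum_n\tau_n$). *)

theory Defs
  imports "HOL-Analysis.Analysis"
begin

text \<open>Vectors in R^{N+1} / Z^{N+1} are represented as functions on nat; only the
indices 0..N are relevant. Integer index vectors k are required to vanish above N.\<close>

definition layer_set :: "nat \<Rightarrow> (nat \<Rightarrow> nat) set" where
  "layer_set N = {k. k 0 = 1 \<and> (\<forall>n. 1 \<le> n \<and> n \<le> N \<and> 0 < k n \<longrightarrow> 0 < k (n - 1))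
                     \<and> (\<forall>n>N. k n = 0)}"

definition ipk :: "nat \<Rightarrow> (nat \<Rightarrow> nat) \<Rightarrow> (nat \<Rightarrow> real) \<Rightarrow> real" where
  "ipk N k \<tau> = (\<Sum>n\<le>N. real (k n) * \<tau> n)"

definition layer_set_tau :: "nat \<Rightarrow> (nat \<Rightarrow> real) \<Rightarrow> (nat \<Rightarrow> nat) set" where
  "layer_set_tau N \<tau> = {k \<in> layer_set N. ipk N k \<tau> \<le> (\<Sum>n\<le>N. \<tau> n)}"

definition ktil :: "nat \<Rightarrow> (nat \<Rightarrow> nat) \<Rightarrow> nat \<Rightarrow> nat" where
  "ktil N k n = (if n < N then k (Suc n) else 0)"

definition uvec :: "nat \<Rightarrow> (nat \<Rightarrow> nat) \<Rightarrow> nat \<Rightarrow> nat" where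
  "uvec N k n = min 1 (ktil N k n)"

definition Vset :: "nat \<Rightarrow> (nat \<Rightarrow> nat) \<Rightarrow> (nat \<Rightarrow> nat) set" where
  "Vset N k = {b. (\<forall>n\<le>N. uvec N k n \<le> b n \<and> b n \<le> min (k n) (ktil N k n)) \<and> (\<forall>n>N. b n = 0)}"

definition amp :: "nat \<Rightarrow> (nat \<Rightarrow> real) \<Rightarrow> (nat \<Rightarrow> nat) \<Rightarrow> real" where
  "amp N x k = (\<Sum>b\<in>Vset N k. \<Prod>n\<le>N.
      real (k n choose b n) * real ((ktil N k n - uvec N k n) choose (b n - uvec N k n))
      * (- x n) ^ (ktil N k n - b n) * x n ^ (k n - b n) * (1 - (x n)\<^sup>2) ^ (b n))"

text \<open>The data D^(tau,R) of an N-layer model, a finite discrete measure, represented by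
its weight function: the mass at time t.\<close>

definition model_data :: "nat \<Rightarrow> (nat \<Rightarrow> real) \<Rightarrow> (nat \<Rightarrow> real) \<Rightarrow> real \<Rightarrow> real" where
  "model_data N \<tau> R t = (\<Sum>k\<in>{k \<in> layer_set_tau N \<tau>. ipk N k \<tau> = t}. amp N R k)"

end

theory Submission
  imports Defs
begin


lemma layer_pos_down:
  assumes "k \<in> layer_set N" "n \<le> N" "0 < k n" "m \<le> n"
  shows "0 < k m"
  using assms(2-4)
proof (induction n)
  case 0 then show ?case by simp
next
  case (Suc n)
  have L: "\<forall>n. 1 \<le> n \<and> n \<le> N \<and> 0 < k n \<longrightarrow> 0 < k (n - 1)"
    using assms(1) unfolding layer_set_def by blast
  have "0 < k n" using L[rule_format, of "Suc n"] Suc.prems by simp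
  show ?case
  proof (cases "m = Suc n")
    case True then show ?thesis using Suc by simp
  next
    case False then show ?thesis using Suc \<open>0 < k n\<close> by simp
  qed
qed

lemma layer_sum_ge:
  assumes "k \<in> layer_set N" "0 < k N"
  shows "N + 1 \<le> (\<Sum>n\<le>N. k n)"
proof -
  have "(\<Sum>n\<le>N. (1::nat)) \<le> (\<Sum>n\<le>N. k n)"
    by (rule sum_mono) (use layer_pos_down[OF assms(1) order_refl assms(2)] in \<open>auto simp: Suc_le_eq\<close>)
  then show ?thesis by simp
qed

lemma layer_ones:
  assumes "k \<in> layer_set N" "0 < k N" "(\<Sum>n\<le>N. k n) = N + 1" "n \<le> N"
  shows "k n = 1"
proof -
  have pos: "\<And>m. m \<le> N \<Longrightarrow> 0 < k m" using layer_pos_down[OF assms(1) order_refl assms(2)] by auto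
  have "(\<Sum>n\<le>N. k n) = (\<Sum>n\<le>N. 1 + (k n - 1))"
    by (rule sum.cong) (use pos in auto)
  also have "\<dots> = (\<Sum>n\<le>N. (1::nat)) + (\<Sum>n\<le>N. (k n - 1))" by (rule sum.distrib)
  also have "\<dots> = N + 1 + (\<Sum>n\<le>N. (k n - 1))" by simp
  finally have "(\<Sum>n\<le>N. (k n - 1)) = 0" using assms(3) by simp
  then have "k n - 1 = 0" using assms(4) by simp
  then show ?thesis using pos[OF assms(4)] by simp
qed

lemma ipk_const: "ipk N k (\<lambda>_. c) = c * real (\<Sum>n\<le>N. k n)"
  unfolding ipk_def by (simp add: sum_distrib_left mult.commute)

lemma layer_tau_const:
  assumes "0 < c"
  shows "layer_set_tau N (\<lambda>_. c) = {k \<in> layer_set N. (\<Sum>n\<le>N. k n) \<le> N + 1}"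
proof -
  have "c * real S \<le> (\<Sum>n\<le>N. c) \<longleftrightarrow> S \<le> N + 1" for S
  proof -
    have "(\<Sum>n\<le>N. c) = c * real (N+1)" by simp
    then show ?thesis using assms by (simp del: of_nat_Suc)
  qed
  then show ?thesis unfolding layer_set_tau_def ipk_const by blast
qed

lemma finite_bounded_funs:
  "finite {k::nat\<Rightarrow>nat. (\<forall>n>N. k n = 0) \<and> (\<forall>n. k n \<le> B)}"
proof -
  have "{k::nat\<Rightarrow>nat. (\<forall>n>N. k n = 0) \<and> (\<forall>n. k n \<le> B)} \<subseteq>
        (\<lambda>f n. if n \<le> N then f n else 0) ` (\<Pi>\<^sub>E n\<in>{..N}. {..B})"
  proof
    fix k :: "nat \<Rightarrow> nat" assume k: "k \<in> {k. (\<forall>n>N. k n = 0) \<and> (\<forall>n. k n \<le> B)}"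
    have "k = (\<lambda>n. if n \<le> N then restrict k {..N} n else 0)" using k by (auto simp: not_le)
    moreover have "restrict k {..N} \<in> (\<Pi>\<^sub>E n\<in>{..N}. {..B})" using k by auto
    ultimately show "k \<in> (\<lambda>f n. if n \<le> N then f n else 0) ` (\<Pi>\<^sub>E n\<in>{..N}. {..B})" by blast
  qed
  then show ?thesis by (rule finite_subset) (auto intro: finite_PiE)
qed

lemma finite_layer_tau:
  assumes "0 < c"
  shows "finite (layer_set_tau N (\<lambda>_. c))"
proof -
  have "layer_set_tau N (\<lambda>_. c) \<subseteq> {k::nat\<Rightarrow>nat. (\<forall>n>N. k n = 0) \<and> (\<forall>n. k n \<le> N+1)}"
  proof safe
    fix k n assume k: "k \<in> layer_set_tau N (\<lambda>_. c)"
    then have kl: "k \<in> layer_set N" and s: "(\<Sum>n\<le>N. k n) \<le> N + 1" using layer_tau_const[OF assms] by auto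
    show "N < n \<Longrightarrow> k n = 0" for n using kl unfolding layer_set_def by auto
    show "k n \<le> N + 1"
    proof (cases "n \<le> N")
      case True then have "k n \<le> (\<Sum>n\<le>N. k n)" by (intro member_le_sum) auto
      then show ?thesis using s by simp
    next
      case False then show ?thesis using kl unfolding layer_set_def by auto
    qed
  qed
  then show ?thesis by (rule finite_subset) (rule finite_bounded_funs)
qed



lemma amp_extend:
  assumes "k (Suc M) = 0"
  shows "amp (Suc M) (R(Suc M := r)) k = amp M R k"
proof -
  have kt: "ktil (Suc M) k = ktil M k"
    using assms by (auto simp: ktil_def fun_eq_iff less_Suc_eq)
  have uv: "uvec (Suc M) k = uvec M k" unfolding uvec_def kt ..
  have kt0: "\<And>n. M \<le> n \<Longrightarrow> ktil M k n = 0" by (simp add: ktil_def)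
  have V: "Vset (Suc M) k = Vset M k"
  proof (rule set_eqI)
    fix b
    show "b \<in> Vset (Suc M) k \<longleftrightarrow> b \<in> Vset M k"
      unfolding Vset_def uv kt mem_Collect_eq
    proof safe
      fix n assume h: "\<forall>n\<le>Suc M. uvec M k n \<le> b n \<and> b n \<le> min (k n) (ktil M k n)"
        "\<forall>n>Suc M. b n = 0" "M < n"
      show "b n = 0"
      proof (cases "n = Suc M")
        case True then show ?thesis using h(1) kt0[of n] h(3) by auto
      next
        case False then show ?thesis using h(2,3) by auto
      qed
    next
      fix n assume h: "\<forall>n\<le>M. uvec M k n \<le> b n \<and> b n \<le> min (k n) (ktil M k n)"
        "\<forall>n>M. b n = 0" "n \<le> Suc M"
      show "uvec M k n \<le> b n" "b n \<le> min (k n) (ktil M k n)"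
        using h kt0[of n] by (auto simp: le_Suc_eq uvec_def)
    qed auto
  qed
  show ?thesis
    unfolding amp_def kt uv V
  proof (rule sum.cong[OF refl])
    fix b assume b: "b \<in> Vset M k"
    have b0: "b (Suc M) = 0" using b unfolding Vset_def by auto
    have u0: "uvec M k (Suc M) = 0" by (simp add: uvec_def ktil_def)
    show "(\<Prod>n\<le>Suc M. real (k n choose b n) * real ((ktil M k n - uvec M k n) choose (b n - uvec M k n)) *
          (- (R(Suc M := r)) n) ^ (ktil M k n - b n) * (R(Suc M := r)) n ^ (k n - b n) * (1 - ((R(Suc M := r)) n)\<^sup>2) ^ b n) =
          (\<Prod>n\<le>M. real (k n choose b n) * real ((ktil M k n - uvec M k n) choose (b n - uvec M k n)) *
          (- R n) ^ (ktil M k n - b n) * R n ^ (k n - b n) * (1 - (R n)\<^sup>2) ^ b n)"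
      by (simp add: b0 u0 kt0 assms)
  qed
qed

lemma amp_ones:
  "amp (Suc M) x (\<lambda>n. if n \<le> Suc M then 1 else 0) = (\<Prod>n\<le>M. 1 - (x n)\<^sup>2) * x (Suc M)"
proof -
  define o1 where "o1 = (\<lambda>n::nat. if n \<le> Suc M then 1 else (0::nat))"
  define bs where "bs = (\<lambda>n::nat. if n \<le> M then 1 else (0::nat))"
  have kt: "ktil (Suc M) o1 = bs" by (auto simp: ktil_def o1_def bs_def fun_eq_iff)
  have uv: "uvec (Suc M) o1 = bs" by (auto simp: uvec_def kt bs_def fun_eq_iff)
  have V: "Vset (Suc M) o1 = {bs}"
  proof (rule set_eqI)
    fix b
    show "b \<in> Vset (Suc M) o1 \<longleftrightarrow> b \<in> {bs}"
      unfolding Vset_def kt uv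
    proof
      assume h: "b \<in> {b. (\<forall>n\<le>Suc M. bs n \<le> b n \<and> b n \<le> min (o1 n) (bs n)) \<and> (\<forall>n>Suc M. b n = 0)}"
      have "b n = bs n" for n
      proof (cases "n \<le> Suc M")
        case True then show ?thesis using h by (auto intro: antisym)
      next
        case False then show ?thesis using h by (auto simp: bs_def)
      qed
      then show "b \<in> {bs}" by auto
    qed (auto simp: bs_def o1_def)
  qed
  have "amp (Suc M) x o1 = (\<Prod>n\<le>Suc M. real (o1 n choose bs n) * real ((bs n - bs n) choose (bs n - bs n)) *
          (- x n) ^ (bs n - bs n) * x n ^ (o1 n - bs n) * (1 - (x n)\<^sup>2) ^ bs n)"
    unfolding amp_def kt uv V by simp
  also have "\<dots> = (\<Prod>n\<le>M. 1 - (x n)\<^sup>2) * x (Suc M)"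
    by (simp add: o1_def bs_def)
  finally show ?thesis unfolding o1_def .
qed

lemma amp_kstar:
  assumes "1 \<le> M"
  shows "amp M x (\<lambda>n. if n = 0 then 1 else if n = 1 then M + 1 else 0) =
         (- x 0) ^ M * (1 - (x 0)\<^sup>2) * x 1 ^ (M + 1)"
proof -
  define ks where "ks = (\<lambda>n::nat. if n = 0 then 1 else if n = 1 then M + 1 else (0::nat))"
  define e0 where "e0 = (\<lambda>n::nat. if n = 0 then 1 else (0::nat))"
  have kt: "ktil M ks = (\<lambda>n. if n = 0 then M + 1 else 0)"
    using assms by (auto simp: ktil_def ks_def fun_eq_iff)
  have uv: "uvec M ks = e0" by (auto simp: uvec_def kt e0_def fun_eq_iff)
  have V: "Vset M ks = {e0}"
  proof (rule set_eqI)
    fix b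
    show "b \<in> Vset M ks \<longleftrightarrow> b \<in> {e0}"
      unfolding Vset_def kt uv
    proof
      assume h: "b \<in> {b. (\<forall>n\<le>M. e0 n \<le> b n \<and> b n \<le> min (ks n) (if n = 0 then M + 1 else 0)) \<and> (\<forall>n>M. b n = 0)}"
      have "b n = e0 n" for n
      proof (cases "n \<le> M")
        case True
        then have hn: "e0 n \<le> b n \<and> b n \<le> min (ks n) (if n = 0 then M + 1 else 0)" using h by blast
        then show ?thesis by (cases "n = 0") (simp_all add: e0_def ks_def)
      next
        case False then show ?thesis using h by (auto simp: e0_def)
      qed
      then show "b \<in> {e0}" by auto
    qed (auto simp: e0_def ks_def)
  qed
  define f where "f = (\<lambda>n. real (ks n choose e0 n) * real (((if n = 0 then M + 1 else 0) - e0 n) choose (e0 n - e0 n)) *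
          (- x n) ^ ((if n = 0 then M + 1 else 0) - e0 n) * x n ^ (ks n - e0 n) * (1 - (x n)\<^sup>2) ^ e0 n)"
  have "amp M x ks = prod f {..M}"
    unfolding amp_def kt uv V f_def by simp
  also have "\<dots> = prod f {0, 1}"
    by (rule prod.mono_neutral_right) (use assms in \<open>auto simp: f_def ks_def e0_def\<close>)
  also have "\<dots> = (- x 0) ^ M * (1 - (x 0)\<^sup>2) * x 1 ^ (M + 1)"
    by (simp add: f_def ks_def e0_def)
  finally show ?thesis unfolding ks_def .
qed



definition onesv :: "nat \<Rightarrow> nat \<Rightarrow> nat" where
  "onesv M = (\<lambda>n. if n \<le> Suc M then 1 else 0)"
definition ssum :: "nat \<Rightarrow> (nat \<Rightarrow> nat) \<Rightarrow> nat" where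
  "ssum N k = (\<Sum>n\<le>N. k n)"
definition Kp :: "nat \<Rightarrow> (nat \<Rightarrow> nat) set" where
  "Kp M = {k \<in> layer_set (Suc M). ssum (Suc M) k = M + 2 \<and> k \<noteq> onesv M}"
definition gfun :: "nat \<Rightarrow> (nat \<Rightarrow> real) \<Rightarrow> real" where
  "gfun M R = (\<Sum>k\<in>Kp M. amp M R k)"
definition Pfun :: "nat \<Rightarrow> (nat \<Rightarrow> real) \<Rightarrow> real" where
  "Pfun M R = (\<Prod>n\<le>M. 1 - (R n)\<^sup>2)"

lemma LS1: "k \<in> layer_set M \<Longrightarrow> k \<in> layer_set (Suc M) \<and> k (Suc M) = 0"
  unfolding layer_set_def by (auto simp: le_Suc_eq)

lemma LS2: assumes "k \<in> layer_set (Suc M)" "k (Suc M) = 0" shows "k \<in> layer_set M"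
proof -
  have "k n = 0" if "M < n" for n
  proof (cases "n = Suc M")
    case True then show ?thesis using assms by simp
  next
    case False then have "Suc M < n" using that by simp
    then show ?thesis using assms(1) unfolding layer_set_def by blast
  qed
  then show ?thesis using assms(1) unfolding layer_set_def by auto
qed

lemma ssum_Suc: "ssum (Suc M) k = ssum M k + k (Suc M)"
  unfolding ssum_def by simp

lemma cS_eq: assumes "0 < c" shows "c * real S = real (M + 2) * c \<longleftrightarrow> S = M + 2"
proof -
  have "c * real S = c * real (M + 2) \<longleftrightarrow> real S = real (M+2)" using assms by simp
  then show ?thesis by (simp only: mult.commute[of _ c] of_nat_eq_iff)
qed

lemma md_set:
  assumes "0 < c"
  shows "{k \<in> layer_set_tau N (\<lambda>_. c). ipk N k (\<lambda>_. c) = t} =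
         {k \<in> layer_set N. ssum N k \<le> N + 1 \<and> c * real (ssum N k) = t}"
  using layer_tau_const[OF assms, of N] unfolding ipk_const ssum_def by blast

lemma md_F1:
  assumes "0 < c" "t \<noteq> real (M + 2) * c"
  shows "model_data (Suc M) (\<lambda>_. c) (R(Suc M := r)) t = model_data M (\<lambda>_. c) R t"
proof -
  have eq: "{k \<in> layer_set (Suc M). ssum (Suc M) k \<le> Suc M + 1 \<and> c * real (ssum (Suc M) k) = t} =
         {k \<in> layer_set M. ssum M k \<le> M + 1 \<and> c * real (ssum M k) = t}"
    (is "?A = ?B")
  proof
    show "?A \<subseteq> ?B"
    proof
      fix k assume k: "k \<in> ?A"
      have k0: "k (Suc M) = 0"
      proof (rule ccontr)
        assume "k (Suc M) \<noteq> 0"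
        then have "Suc M + 1 \<le> ssum (Suc M) k" using k layer_sum_ge[of k "Suc M"] unfolding ssum_def by auto
        then have "ssum (Suc M) k = M + 2" using k by auto
        then have "c * real (ssum (Suc M) k) = real (M + 2) * c" using cS_eq[OF assms(1)] by blast
        then show False using k assms(2) by auto
      qed
      have "ssum (Suc M) k \<noteq> M + 2"
      proof
        assume "ssum (Suc M) k = M + 2"
        then have "c * real (ssum (Suc M) k) = real (M + 2) * c" using cS_eq[OF assms(1)] by blast
        then show False using k assms(2) by auto
      qed
      then show "k \<in> ?B" using k k0 LS2[of k M] ssum_Suc[of M k] by auto
    qed
  next
    show "?B \<subseteq> ?A"
    proof
      fix k assume k: "k \<in> ?B"
      then show "k \<in> ?A" using LS1[of k M] ssum_Suc[of M k] by auto
    qed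
  qed
  show ?thesis
    unfolding model_data_def md_set[OF assms(1)] eq
  proof (rule sum.cong[OF refl])
    fix k assume "k \<in> ?B"
    then have "k (Suc M) = 0" using LS1 by blast
    then show "amp (Suc M) (R(Suc M := r)) k = amp M R k" by (rule amp_extend)
  qed
qed

lemma md_F2:
  assumes "0 < c"
  shows "model_data M (\<lambda>_. c) R (real (M + 2) * c) = 0"
proof -
  have E: "{k \<in> layer_set M. ssum M k \<le> M + 1 \<and> c * real (ssum M k) = real (M + 2) * c} = {}"
  proof -
    have "\<forall>S. S \<le> M + 1 \<longrightarrow> c * real S \<noteq> real (M + 2) * c" using cS_eq[OF assms] by auto
    then show ?thesis by blast
  qed
  show ?thesis unfolding model_data_def md_set[OF assms] E by simp
qed

lemma onesv_layer: "onesv M \<in> layer_set (Suc M)"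
  unfolding layer_set_def onesv_def by auto

lemma onesv_sum: "ssum (Suc M) (onesv M) = M + 2"
  unfolding onesv_def ssum_def by simp

lemma finite_Kp: "finite (Kp M)"
proof -
  have "Kp M \<subseteq> layer_set_tau (Suc M) (\<lambda>_. 1::real)"
    unfolding Kp_def layer_tau_const[OF zero_less_one] ssum_def by auto
  then show ?thesis using finite_layer_tau[OF zero_less_one] finite_subset by blast
qed

lemma Kp_last: "k \<in> Kp M \<Longrightarrow> k (Suc M) = 0"
proof (rule ccontr)
  assume k: "k \<in> Kp M" "k (Suc M) \<noteq> 0"
  then have kl: "k \<in> layer_set (Suc M)" and s: "(\<Sum>n\<le>Suc M. k n) = Suc M + 1" and ne: "k \<noteq> onesv M"
    unfolding Kp_def ssum_def by auto
  have "k n = onesv M n" for n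
  proof (cases "n \<le> Suc M")
    case True then show ?thesis using layer_ones[OF kl _ s] k(2) by (simp add: onesv_def)
  next
    case False then show ?thesis using kl unfolding layer_set_def onesv_def by auto
  qed
  then show False using ne by auto
qed

lemma md_F3:
  assumes "0 < c"
  shows "model_data (Suc M) (\<lambda>_. c) (R(Suc M := r)) (real (M + 2) * c) = r * Pfun M R + gfun M R"
proof -
  have eq: "{k \<in> layer_set (Suc M). ssum (Suc M) k \<le> Suc M + 1 \<and> c * real (ssum (Suc M) k) = real (M + 2) * c}
      = insert (onesv M) (Kp M)"
    unfolding Kp_def using onesv_layer onesv_sum cS_eq[OF assms] by auto
  have notin: "onesv M \<notin> Kp M" unfolding Kp_def by auto
  have a1: "amp (Suc M) (R(Suc M := r)) (onesv M) = r * Pfun M R"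
    unfolding onesv_def amp_ones Pfun_def by simp
  have a2: "(\<Sum>k\<in>Kp M. amp (Suc M) (R(Suc M := r)) k) = gfun M R"
    unfolding gfun_def by (rule sum.cong[OF refl]) (simp add: amp_extend Kp_last)
  show ?thesis
    unfolding model_data_def md_set[OF assms] eq
    by (simp add: sum.insert[OF finite_Kp notin] a1 a2)
qed

lemma md_equiv:
  assumes "0 < c"
  shows "model_data (Suc M) (\<lambda>_. c) (R(Suc M := r)) = model_data M (\<lambda>_. c) R
     \<longleftrightarrow> r * Pfun M R + gfun M R = 0"
proof
  assume "model_data (Suc M) (\<lambda>_. c) (R(Suc M := r)) = model_data M (\<lambda>_. c) R"
  then have "model_data (Suc M) (\<lambda>_. c) (R(Suc M := r)) (real (M + 2) * c) = model_data M (\<lambda>_. c) R (real (M + 2) * c)"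
    by simp
  then show "r * Pfun M R + gfun M R = 0" using md_F2[OF assms] md_F3[OF assms] by simp
next
  assume h: "r * Pfun M R + gfun M R = 0"
  show "model_data (Suc M) (\<lambda>_. c) (R(Suc M := r)) = model_data M (\<lambda>_. c) R"
  proof
    fix t show "model_data (Suc M) (\<lambda>_. c) (R(Suc M := r)) t = model_data M (\<lambda>_. c) R t"
      using md_F1[OF assms] md_F2[OF assms] md_F3[OF assms] h by (cases "t = real (M + 2) * c") auto
  qed
qed



definition ksv :: "nat \<Rightarrow> nat \<Rightarrow> nat" where
  "ksv M = (\<lambda>n. if n = 0 then 1 else if n = 1 then M + 1 else 0)"

definition pp :: "nat \<Rightarrow> real" where
  "pp = (\<lambda>n. if n \<le> 1 then 1/2 else 0)"

lemma ssum_two: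
  assumes "\<And>n. 2 \<le> n \<Longrightarrow> n \<le> N \<Longrightarrow> k n = 0" "1 \<le> N"
  shows "ssum N k = k 0 + k 1"
proof -
  have "ssum N k = sum k {0, 1}"
    unfolding ssum_def by (rule sum.mono_neutral_right) (use assms in auto)
  then show ?thesis by simp
qed

lemma ksv_Kp: assumes "1 \<le> M" shows "ksv M \<in> Kp M"
proof -
  have l: "ksv M \<in> layer_set (Suc M)"
    unfolding layer_set_def ksv_def by auto
  have "ssum (Suc M) (ksv M) = M + 2"
    by (subst ssum_two) (auto simp: ksv_def)
  moreover have "ksv M \<noteq> onesv M"
  proof
    assume "ksv M = onesv M"
    then have "ksv M 1 = onesv M 1" by simp
    then show False using assms by (simp add: ksv_def onesv_def)
  qed
  ultimately show ?thesis using l unfolding Kp_def by auto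
qed

lemma amp_zero_Kp:
  assumes "1 \<le> M" "k \<in> Kp M" "k \<noteq> ksv M"
  shows "amp M pp k = 0"
proof -
  have kl: "k \<in> layer_set (Suc M)" and ks: "ssum (Suc M) k = M + 2" using assms(2) unfolding Kp_def by auto
  define S where "S = {n. 2 \<le> n \<and> n \<le> M \<and> 0 < k n}"
  have finS: "finite S" unfolding S_def by auto
  have neS: "S \<noteq> {}"
  proof
    assume "S = {}"
    then have z: "k n = 0" if "2 \<le> n" for n
    proof (cases "n \<le> M")
      case True then show ?thesis using \<open>S = {}\<close> that unfolding S_def by auto
    next
      case False
      then show ?thesis
      proof (cases "n = Suc M")
        case True then show ?thesis using Kp_last[OF assms(2)] by simp
      next
        case False then have "Suc M < n" using \<open>\<not> n \<le> M\<close> by simp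
        then show ?thesis using kl unfolding layer_set_def by blast
      qed
    qed
    have k0: "k 0 = 1" using kl unfolding layer_set_def by auto
    have "ssum (Suc M) k = k 0 + k 1" by (rule ssum_two) (use z in auto)
    then have "k 1 = M + 1" using ks k0 by simp
    then have "k = ksv M" using z k0 by (auto simp: ksv_def fun_eq_iff)
    then show False using assms(3) by simp
  qed
  define m where "m = Max S"
  have mS: "m \<in> S" unfolding m_def using finS neS by (rule Max_in)
  have m2: "2 \<le> m" "m \<le> M" "0 < k m" using mS unfolding S_def by auto
  have kt: "ktil M k m = 0"
  proof (cases "m < M")
    case True
    have "Suc m \<notin> S" using Max_ge[OF finS, of "Suc m"] unfolding m_def[symmetric] by auto
    then have "k (Suc m) = 0" using True m2 unfolding S_def by auto
    then show ?thesis using True by (simp add: ktil_def)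
  next
    case False then show ?thesis by (simp add: ktil_def)
  qed
  show ?thesis unfolding amp_def
  proof (rule sum.neutral, rule ballI)
    fix b assume b: "b \<in> Vset M k"
    have "b m = 0" using b m2 kt unfolding Vset_def by force
    then have "pp m ^ (k m - b m) = 0" using m2 by (simp add: pp_def)
    then show "(\<Prod>n\<le>M. real (k n choose b n) * real ((ktil M k n - uvec M k n) choose (b n - uvec M k n)) *
          (- pp n) ^ (ktil M k n - b n) * pp n ^ (k n - b n) * (1 - (pp n)\<^sup>2) ^ b n) = 0"
      by (intro prod_zero) (use m2 in auto)
  qed
qed

lemma gfun_pp:
  assumes "1 \<le> M"
  shows "gfun M pp = (- (1/2)) ^ M * (3/4) * (1/2) ^ (M + 1)"
proof -
  have "gfun M pp = amp M pp (ksv M) + (\<Sum>k\<in>Kp M - {ksv M}. amp M pp k)"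
    unfolding gfun_def by (rule sum.remove[OF finite_Kp ksv_Kp[OF assms]])
  also have "(\<Sum>k\<in>Kp M - {ksv M}. amp M pp k) = 0"
    by (rule sum.neutral) (use amp_zero_Kp[OF assms] in auto)
  also have "amp M pp (ksv M) = (- pp 0) ^ M * (1 - (pp 0)\<^sup>2) * pp 1 ^ (M + 1)"
    unfolding ksv_def by (rule amp_kstar[OF assms])
  finally show ?thesis by (simp add: pp_def power2_eq_square)
qed

lemma Pfun_pp:
  assumes "1 \<le> M"
  shows "Pfun M pp = 9/16"
proof -
  have "Pfun M pp = (\<Prod>n\<in>{0,1}. 1 - (pp n)\<^sup>2)"
    unfolding Pfun_def by (rule prod.mono_neutral_right) (use assms in \<open>auto simp: pp_def\<close>)
  then show ?thesis by (simp add: pp_def power2_eq_square)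
qed

lemma pp_good:
  assumes "1 \<le> M"
  shows "0 < \<bar>gfun M pp\<bar> \<and> \<bar>gfun M pp\<bar> < Pfun M pp"
proof -
  have a: "\<bar>gfun M pp\<bar> = (1/2) ^ M * (3/4) * (1/2) ^ (M + 1)"
    unfolding gfun_pp[OF assms] by (simp add: abs_mult power_abs)
  have b1: "(1/2::real) ^ M \<le> 1" by (simp add: power_le_one)
  have b2: "(1/2::real) ^ (M + 1) \<le> 1/2" by (simp add: power_le_one)
  have "(1/2::real) ^ M * (3/4) * (1/2) ^ (M + 1) \<le> 1 * (3/4) * (1/2)"
    by (intro mult_mono b1 b2) auto
  then show ?thesis unfolding a Pfun_pp[OF assms] by simp
qed



lemma amp_cong: "(\<And>n. n \<le> M \<Longrightarrow> R n = R' n) \<Longrightarrow> amp M R k = amp M R' k"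
  unfolding amp_def by (intro sum.cong refl prod.cong) auto

lemma gfun_cong: "(\<And>n. n \<le> M \<Longrightarrow> R n = R' n) \<Longrightarrow> gfun M R = gfun M R'"
  unfolding gfun_def by (intro sum.cong refl amp_cong) auto

lemma Pfun_cong: "(\<And>n. n \<le> M \<Longrightarrow> R n = R' n) \<Longrightarrow> Pfun M R = Pfun M R'"
  unfolding Pfun_def by (intro prod.cong) auto

lemma gfun_cont: "continuous_on UNIV (gfun M)"
  unfolding gfun_def amp_def by (intro continuous_intros continuous_on_product_coordinates)

lemma Pfun_cont: "continuous_on UNIV (Pfun M)"
  unfolding Pfun_def by (intro continuous_intros continuous_on_product_coordinates)

lemma comp_meas: "n \<le> M \<Longrightarrow> (\<lambda>R. R n) \<in> borel_measurable (Pi\<^sub>M {..M} (\<lambda>_. lborel))"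
  using measurable_component_singleton[of n "{..M}" "\<lambda>_. lborel"] by simp

lemma gfun_meas: "gfun M \<in> borel_measurable (Pi\<^sub>M {..M} (\<lambda>_. lborel))"
  unfolding gfun_def amp_def
  by (intro borel_measurable_sum borel_measurable_prod borel_measurable_times borel_measurable_power
      borel_measurable_diff borel_measurable_uminus borel_measurable_const comp_meas) auto

lemma Pfun_meas: "Pfun M \<in> borel_measurable (Pi\<^sub>M {..M} (\<lambda>_. lborel))"
  unfolding Pfun_def
  by (intro borel_measurable_prod borel_measurable_power
      borel_measurable_diff borel_measurable_const comp_meas) auto



lemma Pfun_pos: assumes "\<forall>n\<le>M. \<bar>R n\<bar> < 1" shows "0 < Pfun M R"
  unfolding Pfun_def
proof (intro prod_pos)
  fix n assume "n \<in> {..M}"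
  then have "\<bar>R n\<bar> < 1" using assms by auto
  then have "(R n)\<^sup>2 < 1" using abs_square_less_1 by blast
  then show "0 < 1 - (R n)\<^sup>2" by simp
qed

lemma exists_r:
  assumes "0 < P"
  shows "(\<exists>r::real. r \<noteq> 0 \<and> \<bar>r\<bar> < 1 \<and> r * P + g = 0) \<longleftrightarrow> 0 < \<bar>g\<bar> \<and> \<bar>g\<bar> < P"
proof
  assume "\<exists>r::real. r \<noteq> 0 \<and> \<bar>r\<bar> < 1 \<and> r * P + g = 0"
  then obtain r where r: "r \<noteq> 0" "\<bar>r\<bar> < 1" "r * P + g = 0" by blast
  then have g: "g = - (r * P)" by linarith
  have "\<bar>g\<bar> = \<bar>r\<bar> * P" using assms unfolding g by (simp add: abs_mult)
  moreover have "\<bar>r\<bar> * P < 1 * P" using r(2) assms by (intro mult_strict_right_mono) auto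
  moreover have "0 < \<bar>r\<bar> * P" using r(1) assms by simp
  ultimately show "0 < \<bar>g\<bar> \<and> \<bar>g\<bar> < P" by simp
next
  assume h: "0 < \<bar>g\<bar> \<and> \<bar>g\<bar> < P"
  define r where "r = - g / P"
  have "r \<noteq> 0" using h assms by (simp add: r_def)
  moreover have "\<bar>r\<bar> = \<bar>g\<bar> / P" using assms by (simp add: r_def abs_divide)
  then have "\<bar>r\<bar> < 1" using h assms by (simp add: divide_less_eq)
  moreover have "r * P + g = 0" using assms by (simp add: r_def)
  ultimately show "\<exists>r::real. r \<noteq> 0 \<and> \<bar>r\<bar> < 1 \<and> r * P + g = 0" by blast
qed

theorem theorem3p2:
  fixes M :: nat and c :: real
  assumes "1 \<le> M" and "0 < c"
  defines "\<RR> \<equiv> {R \<in> {..M} \<rightarrow>\<^sub>E (UNIV :: real set).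
      (\<forall>n\<le>M. \<bar>R n\<bar> < 1) \<and>
      (\<exists>r. r \<noteq> 0 \<and> \<bar>r\<bar> < 1 \<and>
           model_data (Suc M) (\<lambda>_. c) (R(Suc M := r)) = model_data M (\<lambda>_. c) R)}"
  shows "\<RR> \<in> sets (completion (Pi\<^sub>M {..M} (\<lambda>_. lborel))) \<and>
         0 < emeasure (completion (Pi\<^sub>M {..M} (\<lambda>_. lborel))) \<RR>"
proof -
  define Mes where "Mes = Pi\<^sub>M {..M} (\<lambda>_. lborel::real measure)"
  have sp: "space Mes = {..M} \<rightarrow>\<^sub>E (UNIV :: real set)" unfolding Mes_def by (simp add: space_PiM)
  have Rchar: "\<RR> = (\<Pi>\<^sub>E n\<in>{..M}. {-1<..<1}) \<inter> {R \<in> space Mes. 0 < \<bar>gfun M R\<bar>}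
                   \<inter> {R \<in> space Mes. \<bar>gfun M R\<bar> < Pfun M R}"
  proof (rule set_eqI)
    fix R :: "nat \<Rightarrow> real"
    show "R \<in> \<RR> \<longleftrightarrow> R \<in> (\<Pi>\<^sub>E n\<in>{..M}. {-1<..<1}) \<inter> {R \<in> space Mes. 0 < \<bar>gfun M R\<bar>}
                   \<inter> {R \<in> space Mes. \<bar>gfun M R\<bar> < Pfun M R}"
    proof (cases "R \<in> {..M} \<rightarrow>\<^sub>E (UNIV :: real set) \<and> (\<forall>n\<le>M. \<bar>R n\<bar> < 1)")
      case True
      then have box: "R \<in> (\<Pi>\<^sub>E n\<in>{..M}. {-1<..<1})" by (auto simp: PiE_iff abs_less_iff)
      have "R \<in> \<RR> \<longleftrightarrow> (\<exists>r::real. r \<noteq> 0 \<and> \<bar>r\<bar> < 1 \<and> r * Pfun M R + gfun M R = 0)"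
      proof -
        have "R \<in> \<RR> \<longleftrightarrow> (\<exists>r. r \<noteq> 0 \<and> \<bar>r\<bar> < 1 \<and>
           model_data (Suc M) (\<lambda>_. c) (R(Suc M := r)) = model_data M (\<lambda>_. c) R)"
          unfolding \<RR>_def using True by blast
        then show ?thesis by (simp only: md_equiv[OF assms(2)])
      qed
      also have "\<dots> \<longleftrightarrow> 0 < \<bar>gfun M R\<bar> \<and> \<bar>gfun M R\<bar> < Pfun M R"
        by (rule exists_r[OF Pfun_pos]) (use True in auto)
      finally have "R \<in> \<RR> \<longleftrightarrow> 0 < \<bar>gfun M R\<bar> \<and> \<bar>gfun M R\<bar> < Pfun M R" .
      moreover have "R \<in> space Mes" using True unfolding sp by blast
      ultimately show ?thesis using box by blast
    next
      case False
      then have "R \<notin> \<RR>" unfolding \<RR>_def by blast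
      moreover have "R \<notin> (\<Pi>\<^sub>E n\<in>{..M}. {-1<..<1})" using False by (auto simp: PiE_iff abs_less_iff)
      ultimately show ?thesis by blast
    qed
  qed
  have meas: "\<RR> \<in> sets Mes"
    unfolding Rchar
  proof (intro sets.Int)
    show "(\<Pi>\<^sub>E n\<in>{..M}. {-1<..<1::real}) \<in> sets Mes" unfolding Mes_def by (rule sets_PiM_I_finite) auto
    show "{R \<in> space Mes. 0 < \<bar>gfun M R\<bar>} \<in> sets Mes"
      by (intro borel_measurable_less borel_measurable_const borel_measurable_abs) (simp add: Mes_def gfun_meas)
    show "{R \<in> space Mes. \<bar>gfun M R\<bar> < Pfun M R} \<in> sets Mes"
      by (intro borel_measurable_less borel_measurable_abs) (simp_all add: Mes_def gfun_meas Pfun_meas)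
  qed
  define U where "U = {R::nat\<Rightarrow>real. \<forall>n\<in>{..M}. R (id n) \<in> {-1<..<1}} \<inter> {R. 0 < \<bar>gfun M R\<bar>}
                   \<inter> {R. \<bar>gfun M R\<bar> < Pfun M R}"
  have openU: "open U"
    unfolding U_def
    by (intro open_Int product_topology_basis' open_Collect_less continuous_intros gfun_cont Pfun_cont) auto
  have pp1: "\<forall>n\<in>{..M}. pp (id n) \<in> {-1<..<1}" by (auto simp: pp_def)
  have pU: "pp \<in> U" using pp_good[OF assms(1)] pp1 unfolding U_def by blast
  obtain X where X: "pp \<in> (\<Pi>\<^sub>E i\<in>UNIV. X i)" "\<forall>i. openin euclidean (X i)" "(\<Pi>\<^sub>E i\<in>UNIV. X i) \<subseteq> U"
    using product_topology_open_contains_basis[OF openU[unfolded open_fun_def] pU]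
    by (elim exE conjE) (rule that; assumption)
  have "\<forall>i. \<exists>e>0. ball (pp i) e \<subseteq> X i"
  proof
    fix i
    have "open (X i)" using X(2) by simp
    moreover have "pp i \<in> X i" using X(1) by auto
    ultimately show "\<exists>e>0. ball (pp i) e \<subseteq> X i" using open_contains_ball by blast
  qed
  then obtain e where e: "\<And>i. 0 < e i" "\<And>i. ball (pp i) (e i) \<subseteq> X i" by metis
  define B where "B = (\<Pi>\<^sub>E i\<in>{..M}. {pp i - e i <..< pp i + e i})"
  have BR: "B \<subseteq> \<RR>"
  proof
    fix R assume R: "R \<in> B"
    define R' where "R' = (\<lambda>n. if n \<le> M then R n else pp n)"
    have "R' \<in> (\<Pi>\<^sub>E i\<in>UNIV. X i)"
    proof -
      have "R' i \<in> X i" for i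
      proof (cases "i \<le> M")
        case True
        then have "R i \<in> {pp i - e i<..<pp i + e i}" using R unfolding B_def by (auto simp: PiE_iff)
        then have "R i \<in> ball (pp i) (e i)" by (auto simp: dist_real_def abs_less_iff)
        then show ?thesis using e(2)[of i] True by (auto simp: R'_def)
      next
        case False then show ?thesis using X(1) by (auto simp: R'_def)
      qed
      then show ?thesis by auto
    qed
    then have "R' \<in> U" using X(3) by blast
    moreover have "gfun M R' = gfun M R" "Pfun M R' = Pfun M R"
      by (rule gfun_cong, simp add: R'_def) (rule Pfun_cong, simp add: R'_def)
    ultimately have c1: "0 < \<bar>gfun M R\<bar>" "\<bar>gfun M R\<bar> < Pfun M R" "\<forall>n\<in>{..M}. R n \<in> {-1<..<1}"
    proof -
      have "0 < \<bar>gfun M R'\<bar>" "\<bar>gfun M R'\<bar> < Pfun M R'" "\<forall>n\<in>{..M}. R' (id n) \<in> {-1<..<1}"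
        using \<open>R' \<in> U\<close> unfolding U_def by blast+
      moreover have "\<forall>n\<in>{..M}. R' (id n) = R n" by (simp add: R'_def)
      ultimately show "0 < \<bar>gfun M R\<bar>" "\<bar>gfun M R\<bar> < Pfun M R" "\<forall>n\<in>{..M}. R n \<in> {-1<..<1}"
        using \<open>gfun M R' = gfun M R\<close> \<open>Pfun M R' = Pfun M R\<close> by auto
    qed
    have "R \<in> space Mes" using R unfolding sp B_def by auto
    moreover have "R \<in> (\<Pi>\<^sub>E n\<in>{..M}. {-1<..<1})" using R c1(3) unfolding B_def by auto
    ultimately show "R \<in> \<RR>" unfolding Rchar using c1 by blast
  qed
  interpret product_sigma_finite "\<lambda>_. lborel::real measure" by standard
  have "emeasure Mes B = (\<Prod>i\<in>{..M}. emeasure lborel {pp i - e i <..< pp i + e i})"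
    unfolding Mes_def B_def by (rule emeasure_PiM) auto
  also have "\<dots> = (\<Prod>i\<in>{..M}. ennreal (2 * e i))"
    using e(1) by (intro prod.cong refl) (auto simp: less_imp_le)
  also have "\<dots> = ennreal (\<Prod>i\<in>{..M}. 2 * e i)"
    using e(1) by (intro prod_ennreal) (auto simp: less_imp_le)
  finally have "0 < emeasure Mes B" using e(1) by (simp add: prod_pos)
  also have "emeasure Mes B \<le> emeasure Mes \<RR>"
    by (rule emeasure_mono[OF BR meas])
  finally have pos: "0 < emeasure Mes \<RR>" .
  have s1: "\<RR> \<in> sets (completion Mes)" by (rule sets_completionI_sets[OF meas])
  have s2: "emeasure (completion Mes) \<RR> = emeasure Mes \<RR>"
    by (simp only: emeasure_completion[OF s1] main_part[OF meas])
  have "\<RR> \<in> sets (completion Mes) \<and> 0 < emeasure (completion Mes) \<RR>"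
    using s1 pos unfolding s2 by (intro conjI)
  then show ?thesis unfolding Mes_def .
qed


end
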